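(* Let $\mathfrak{A}$ be an abstract calculus with upward space $\mathrm{Up}(\mathfrak{A})=(\mathbf{S},\eqslantless)$. Then $\eqslantless$ is a connected partial order on $\mathbf S$. Moreover, taking $\mathfrak{B}\wedge\mathfrak{C}=\inf\{\mathfrak{B},\mathfrak{C}\}$ and $\mathfrak{B}\vee\mathfrak{C}=\sup\{\mathfrak{B},\mathfrak{C}\}$ with respect to $\eqslantless$, $(\mathbf{S},\wedge,\vee)$ is a complete lattice whose bottom element is $\mathfrak{A}$.
   Context: Fix a non-empty finite set $\mathtt{E}$ of edge types and a countably infinite set $\mathtt S$ of sequents (atomic labels). G-sequents are finite graphs with vertex set $\mathcal V$, edge relations $\mathcal E_a\subseteq\mathcal V\times\mathcal V$ for $a\in\mathtt E$, and vertex labels in $\mathtt S$; written $\Gamma\vdash\Delta$ with $\Gamma$ the set of edge atoms $w\mathcal E_a u$ and $\Delta$ the set of prefixed sequents $w:S$. Let $\overline{\mathtt E}=\{\bar a\mid a\in\mathtt E\}$, $\bar{\bar z}=z$, $\overline{x_1\cdots x_n}=\bar x_n\cdots\bar x_1$. An $\mathtt E$-system is a finite set $\mathbf G$ of production rules $x\longrightarrow t$ ($x\in\mathtt E\cup\overline{\mathtt E}$, $t$ a string over $\mathtt E\cup\overline{\mathtt E}$) with $x\longrightarrow t\in\mathbf G$ iff $\bar x\longrightarrow\bar t\in\mathbf G$; $\mathbf G(a)=\{t\mid a\longrightarrow^*_{\mathbf G}t\}$. Rules of an abstract calculus are of the kinds: initial rules $i(C,R)$ and reachability rules $r(\mathcal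 C,R)$, whose applicability is governed by constraints $C$ (resp. constraint families $\mathcal C$), i.e. trees whose edges are labelled by languages $\mathbf G'(a)$ ($a\in\mathtt E$, $\mathbf G'$ an $\mathtt E$-system) requiring $\mathbf G'(a)$-labelled paths in the g-sequent, and by sequent constraints $R$; local rules and expansion rules (no constraints); and Horn rules: for $a\in\mathtt E$ and a string $s=x_1\cdots x_n$, the forward Horn rule with premise $\Gamma,w\mathcal E_s u,w\mathcal E_a u\vdash\Delta$ and conclusion $\Gamma,w\mathcal E_s u\vdash\Delta$, and the backward Horn rule with $u\mathcal E_a w$ in place of $w\mathcal E_a u$ (here $w\mathcal E_s u$ abbreviates a chain $w\mathcal E_{x_1}v_1,\dots,v_{n-1}\mathcal E_{x_n}u$, $v\mathcal E_{\bar a}z$ meaning $z\mathcal E_a v$, $w\mathcal E_\varepsilon u$ meaning $w=u$). $\mathbf G(h_f)=\{a\longrightarrow s,\bar a\longrightarrow\bar s\}$, $\mathbf G(h_b)=\{\bar a\longrightarrow s,a\longrightarrow\bar s\}$; $\mathbf G(\mathrm H)$ is the union over a set $\mathrm H$ of Horn rules. Absorb: $C\oplus\mathbf G$ replaces every edge label $\mathbf G'(a)$ by $(\mathbf G'\cup\mathbf G)(a)$ (componentwise on families); $i(C,R)\oplus\mathbf G=i(C\oplus\mathbf G,R)$, $r(\mathcal C,R)\oplus\mathbf G=r(\mathcal C\oplus\mathbf G,R)$. An abstract calculus is $\mathfrak A=(\mathcal G^{\mathtt E},\mathfrak R)$ with $\mathcal G^{\mathtt E}$ the set of g-sequents over $\mathtt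 E$ and $\mathfrak R$ a finite set of such rules; $\mathrm H(\mathfrak A)$ is its set of Horn rules; $\mathfrak A\setminus\mathrm R$ removes rules; $\mathfrak A\oplus\mathbf G$ replaces each initial and reachability rule $\rho$ by $\rho\oplus\mathbf G$. Dependency graph of Horn rules: for a production rule $p=x\longrightarrow t$ let $\bar p=\bar x\longrightarrow\bar t$; each Horn rule $h$ has a production pair $(p,\bar p)$ formed by its grammar. For distinct pairs with $p=x\longrightarrow s$, $p'=y\longrightarrow t$, $(p,\bar p)\sqsubset(p',\bar p')$ iff $s$ or $\bar s$ contains $y$; $\sqsubseteq$ is its reflexive-transitive closure; $\mathsf{DG}(\mathrm H)=(\mathrm H,\sqsubseteq')$ where $h\sqsubseteq'h'$ iff the pair of $h$ is $\sqsubseteq$ the pair of $h'$. $V'$ is fracturable in $(V,\sqsubseteq)$ iff there are no $v\in V'$, $v'\in V\setminus V'$ with $v\sqsubseteq v'$; $V''$ is anti-fracturable iff $V''=V\setminus V'$ for a fracturable $V'$. Upward space $\mathrm{Up}(\mathfrak A)=(\mathbf S,\eqslantless)$, defined inductively: $\mathfrak A\in\mathbf S$; if $\mathfrak B\in\mathbf S$ and $\mathrm H'\subseteq\mathrm H(\mathfrak B)$ is anti-fracturable in $\mathsf{DG}(\mathrm H(\mathfrak B))$, then $\mathfrak C=(\mathfrak B\oplus\mathbf G(\mathrm H'))\setminus\mathrm H'\in\mathbf S$ and $\mathfrak B\eqslantless\mathfrak C$. *)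

theory Defs
  imports Main
begin

text \<open>The edge types E are the elements of a (nonempty) finite type 'e.
  A symbol is an element of E or of the set of inverses (bar E).\<close>

datatype 'e sym = Pos 'e | Neg 'e

fun bar :: "'e sym \<Rightarrow> 'e sym" where
  "bar (Pos a) = Neg a"
| "bar (Neg a) = Pos a"

definition bar_str :: "'e sym list \<Rightarrow> 'e sym list" where
  "bar_str xs = rev (map bar xs)"

type_synonym 'e prod = "'e sym \<times> 'e sym list"

definition bar_prod :: "'e prod \<Rightarrow> 'e prod" where
  "bar_prod p = (bar (fst p), bar_str (snd p))"

definition E_system :: "'e prod set \<Rightarrow> bool" where
  "E_system G \<longleftrightarrow> finite G \<and> (\<forall>x t. (x, t) \<in> G \<longleftrightarrow> (bar x, bar_str t) \<in> G)"

inductive derives :: "'e prod set \<Rightarrow> 'e sym list \<Rightarrow> 'e sym list \<Rightarrow> bool" for G where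
  refl: "derives G u u"
| step: "derives G u (v @ [x] @ w) \<Longrightarrow> (x, t) \<in> G \<Longrightarrow> derives G u (v @ t @ w)"

definition lang :: "'e prod set \<Rightarrow> 'e \<Rightarrow> 'e sym list set" where
  "lang G a = {t. derives G [Pos a] t}"

text \<open>A constraint is a tree whose edges are labelled by languages G'(a),
  represented syntactically by the pair (G', a) (denoting lang G' a).\<close>

datatype 'e ctree = CNode "(('e prod set \<times> 'e) \<times> 'e ctree) list"

fun ct_labels :: "'e ctree \<Rightarrow> ('e prod set \<times> 'e) set" where
  "ct_labels (CNode es) = (\<Union>e \<in> set es. {fst e} \<union> ct_labels (snd e))"

fun ct_absorb :: "'e ctree \<Rightarrow> 'e prod set \<Rightarrow> 'e ctree" where
  "ct_absorb (CNode es) G =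
     CNode (map (\<lambda>e. ((fst (fst e) \<union> G, snd (fst e)), ct_absorb (snd e) G)) es)"

text \<open>Rules of an abstract calculus. 'r: sequent constraints; 'l: data of local
  and expansion rules (these carry no constraints).\<close>

datatype ('e, 'r, 'l) rule =
    Init "'e ctree" 'r
  | Reach "'e ctree list" 'r
  | Local 'l
  | Expan 'l
  | HornF 'e "'e sym list"
  | HornB 'e "'e sym list"

fun is_horn :: "('e, 'r, 'l) rule \<Rightarrow> bool" where
  "is_horn (HornF a s) = True"
| "is_horn (HornB a s) = True"
| "is_horn _ = False"

fun rule_absorb :: "('e, 'r, 'l) rule \<Rightarrow> 'e prod set \<Rightarrow> ('e, 'r, 'l) rule" where
  "rule_absorb (Init C R) G = Init (ct_absorb C G) R"
| "rule_absorb (Reach Cs R) G = Reach (map (\<lambda>C. ct_absorb C G) Cs) R"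
| "rule_absorb \<rho> G = \<rho>"

fun rule_grammars :: "('e, 'r, 'l) rule \<Rightarrow> 'e prod set set" where
  "rule_grammars (Init C R) = fst ` ct_labels C"
| "rule_grammars (Reach Cs R) = (\<Union>C \<in> set Cs. fst ` ct_labels C)"
| "rule_grammars _ = {}"

text \<open>An abstract calculus (over the fixed set of g-sequents over E) is given by
  a finite set of rules; all grammars labelling constraints are E-systems.\<close>

type_synonym ('e, 'r, 'l) calculus = "('e, 'r, 'l) rule set"

definition abstract_calculus :: "('e, 'r, 'l) calculus \<Rightarrow> bool" where
  "abstract_calculus A \<longleftrightarrow> finite A \<and> (\<forall>\<rho> \<in> A. \<forall>G \<in> rule_grammars \<rho>. E_system G)"

definition horns :: "('e, 'r, 'l) calculus \<Rightarrow> ('e, 'r, 'l) rule set" where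
  "horns A = {h \<in> A. is_horn h}"

definition calc_absorb :: "('e, 'r, 'l) calculus \<Rightarrow> 'e prod set \<Rightarrow> ('e, 'r, 'l) calculus" where
  "calc_absorb A G = (\<lambda>\<rho>. rule_absorb \<rho> G) ` A"

fun horn_prod :: "('e, 'r, 'l) rule \<Rightarrow> 'e prod" where
  "horn_prod (HornF a s) = (Pos a, s)"
| "horn_prod (HornB a s) = (Neg a, s)"
| "horn_prod _ = undefined"

definition horn_pair :: "('e, 'r, 'l) rule \<Rightarrow> 'e prod set" where
  "horn_pair h = {horn_prod h, bar_prod (horn_prod h)}"

definition horn_grammar :: "('e, 'r, 'l) rule \<Rightarrow> 'e prod set" where
  "horn_grammar h = horn_pair h"

definition horns_grammar :: "('e, 'r, 'l) rule set \<Rightarrow> 'e prod set" where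
  "horns_grammar H = (\<Union>h \<in> H. horn_grammar h)"

definition pair_dep :: "('e, 'r, 'l) rule \<Rightarrow> ('e, 'r, 'l) rule \<Rightarrow> bool" where
  "pair_dep h h' \<longleftrightarrow> horn_pair h \<noteq> horn_pair h' \<and>
     (fst (horn_prod h') \<in> set (snd (horn_prod h)) \<or>
      fst (horn_prod h') \<in> set (bar_str (snd (horn_prod h))))"

definition pair_step :: "('e, 'r, 'l) rule set \<Rightarrow> ('e prod set \<times> 'e prod set) set" where
  "pair_step H = {(horn_pair h, horn_pair h') | h h'. h \<in> H \<and> h' \<in> H \<and> pair_dep h h'}"

definition DG_le :: "('e, 'r, 'l) rule set \<Rightarrow> ('e, 'r, 'l) rule \<Rightarrow> ('e, 'r, 'l) rule \<Rightarrow> bool" where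
  "DG_le H h h' \<longleftrightarrow> (horn_pair h, horn_pair h') \<in> (pair_step H)\<^sup>*"

definition fracturable :: "('e, 'r, 'l) rule set \<Rightarrow> ('e, 'r, 'l) rule set \<Rightarrow> bool" where
  "fracturable V V' \<longleftrightarrow> V' \<subseteq> V \<and> \<not> (\<exists>v \<in> V'. \<exists>v' \<in> V - V'. DG_le V v v')"

definition anti_fracturable :: "('e, 'r, 'l) rule set \<Rightarrow> ('e, 'r, 'l) rule set \<Rightarrow> bool" where
  "anti_fracturable V V'' \<longleftrightarrow> (\<exists>V'. fracturable V V' \<and> V'' = V - V')"

definition up_step :: "('e, 'r, 'l) calculus \<Rightarrow> ('e, 'r, 'l) rule set \<Rightarrow> ('e, 'r, 'l) calculus" where
  "up_step B H' = calc_absorb B (horns_grammar H') - H'"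

inductive_set upS :: "('e, 'r, 'l) calculus \<Rightarrow> ('e, 'r, 'l) calculus set" for A where
  base: "A \<in> upS A"
| step: "B \<in> upS A \<Longrightarrow> H' \<subseteq> horns B \<Longrightarrow> anti_fracturable (horns B) H'
          \<Longrightarrow> up_step B H' \<in> upS A"

text \<open>The relation \<eqslantless> of Up(A), as generated by the inductive clause.\<close>

definition upR :: "('e, 'r, 'l) calculus \<Rightarrow> (('e, 'r, 'l) calculus \<times> ('e, 'r, 'l) calculus) set" where
  "upR A = {(B, C). B \<in> upS A \<and> (\<exists>H'. H' \<subseteq> horns B \<and> anti_fracturable (horns B) H'
                                        \<and> C = up_step B H')}"

definition connected_on :: "'a set \<Rightarrow> ('a \<times> 'a) set \<Rightarrow> bool" where
  "connected_on S r \<longleftrightarrow> (\<forall>x \<in> S. \<forall>y \<in> S. (x, y) \<in> (r \<union> r\<inverse>)\<^sup>*)"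

definition is_lub_on :: "'a set \<Rightarrow> ('a \<times> 'a) set \<Rightarrow> 'a set \<Rightarrow> 'a \<Rightarrow> bool" where
  "is_lub_on S r X u \<longleftrightarrow> u \<in> S \<and> (\<forall>x \<in> X. (x, u) \<in> r)
      \<and> (\<forall>v \<in> S. (\<forall>x \<in> X. (x, v) \<in> r) \<longrightarrow> (u, v) \<in> r)"

definition is_glb_on :: "'a set \<Rightarrow> ('a \<times> 'a) set \<Rightarrow> 'a set \<Rightarrow> 'a \<Rightarrow> bool" where
  "is_glb_on S r X l \<longleftrightarrow> l \<in> S \<and> (\<forall>x \<in> X. (l, x) \<in> r)
      \<and> (\<forall>v \<in> S. (\<forall>x \<in> X. (v, x) \<in> r) \<longrightarrow> (v, l) \<in> r)"

definition complete_lattice_on :: "'a set \<Rightarrow> ('a \<times> 'a) set \<Rightarrow> bool" where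
  "complete_lattice_on S r \<longleftrightarrow> partial_order_on S r \<and>
     (\<forall>X \<subseteq> S. (\<exists>u. is_lub_on S r X u) \<and> (\<exists>l. is_glb_on S r X l))"

end

theory Submission
  imports Defs
begin

lemma ct_absorb_empty: "ct_absorb C {} = C"
proof (induction C "{}::'a prod set" rule: ct_absorb.induct)
  case (1 es)
  then show ?case by (auto intro: map_idI)
qed

lemma ct_absorb_twice: "ct_absorb (ct_absorb C G1) G2 = ct_absorb C (G1 \<union> G2)"
proof (induction C G1 rule: ct_absorb.induct)
  case (1 es G)
  then show ?case by (auto simp: Un_assoc)
qed

lemma rule_absorb_empty: "rule_absorb \<rho> {} = \<rho>"
  by (cases \<rho>) (auto simp: ct_absorb_empty intro: map_idI)

lemma rule_absorb_twice: "rule_absorb (rule_absorb \<rho> G1) G2 = rule_absorb \<rho> (G1 \<union> G2)"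
  by (cases \<rho>) (auto simp: ct_absorb_twice)

lemma is_horn_absorb: "is_horn (rule_absorb \<rho> G) = is_horn \<rho>"
  by (cases \<rho>) auto

lemma horn_absorb: "is_horn \<rho> \<Longrightarrow> rule_absorb \<rho> G = \<rho>"
  by (cases \<rho>) auto

lemma calc_absorb_empty: "calc_absorb B {} = B"
  by (simp add: calc_absorb_def rule_absorb_empty)

lemma horns_up: "horns (calc_absorb B G - H) = horns B - H"
  unfolding horns_def calc_absorb_def
  by (auto simp: is_horn_absorb horn_absorb) (metis horn_absorb image_eqI)

lemma calc_absorb_diff:
  assumes "\<forall>h\<in>H. is_horn h"
  shows "calc_absorb (X - H) G = calc_absorb X G - H"
  unfolding calc_absorb_def
proof
  show "(\<lambda>\<rho>. rule_absorb \<rho> G) ` (X - H) \<subseteq> (\<lambda>\<rho>. rule_absorb \<rho> G) ` X - H"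
    using assms by (auto simp: is_horn_absorb) (metis is_horn_absorb horn_absorb)
  show "(\<lambda>\<rho>. rule_absorb \<rho> G) ` X - H \<subseteq> (\<lambda>\<rho>. rule_absorb \<rho> G) ` (X - H)"
    using assms by (auto simp: horn_absorb)
qed

lemma calc_absorb_twice: "calc_absorb (calc_absorb B G1) G2 = calc_absorb B (G1 \<union> G2)"
  unfolding calc_absorb_def by (auto simp: rule_absorb_twice image_image)

lemma up_twice:
  assumes "\<forall>h\<in>H1. is_horn h"
  shows "calc_absorb (calc_absorb B G1 - H1) G2 - H2 = calc_absorb B (G1 \<union> G2) - (H1 \<union> H2)"
proof -
  have "calc_absorb (calc_absorb B G1 - H1) G2 - H2 = calc_absorb (calc_absorb B G1) G2 - H1 - H2"
    using calc_absorb_diff[OF assms, of "calc_absorb B G1" G2] by simp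
  also have "\<dots> = calc_absorb B (G1 \<union> G2) - (H1 \<union> H2)"
    by (simp add: calc_absorb_twice Diff_eq Int_assoc)
  finally show ?thesis .
qed

lemma horns_grammar_Un: "horns_grammar (H1 \<union> H2) = horns_grammar H1 \<union> horns_grammar H2"
  unfolding horns_grammar_def by auto

lemma horns_grammar_empty: "horns_grammar {} = {}"
  unfolding horns_grammar_def by auto

lemma pair_step_mono: "V \<subseteq> W \<Longrightarrow> pair_step V \<subseteq> pair_step W"
  unfolding pair_step_def by blast

lemma DG_le_mono: "V \<subseteq> W \<Longrightarrow> DG_le V v v' \<Longrightarrow> DG_le W v v'"
  unfolding DG_le_def by (meson pair_step_mono rtrancl_mono subsetD)

lemma restrict_path:
  assumes fr: "fracturable W V" and v: "v \<in> V"
    and p: "(horn_pair v, Q) \<in> (pair_step W)\<^sup>*"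
  shows "\<exists>w\<in>V. horn_pair w = Q \<and> (horn_pair v, Q) \<in> (pair_step V)\<^sup>*"
  using p
proof (induction rule: rtrancl_induct)
  case base
  then show ?case using v by auto
next
  case (step Q R)
  then obtain w where w: "w \<in> V" "horn_pair w = Q" "(horn_pair v, Q) \<in> (pair_step V)\<^sup>*" by auto
  from step(2) obtain h h' where hh: "h \<in> W" "h' \<in> W" "pair_dep h h'" "horn_pair h = Q" "horn_pair h' = R"
    unfolding pair_step_def by auto
  have "DG_le W w h" using w hh unfolding DG_le_def by auto
  with fr w hh have hV: "h \<in> V" unfolding fracturable_def by blast
  have "(Q, R) \<in> pair_step W" using step(2) .
  then have "DG_le W w h'" using w hh unfolding DG_le_def by auto
  with fr w hh have h'V: "h' \<in> V" unfolding fracturable_def by blast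
  have "(Q, R) \<in> pair_step V" using hV h'V hh unfolding pair_step_def by blast
  then show ?case using h'V hh(5) rtrancl.rtrancl_into_rtrancl[OF w(3)] by blast
qed

lemma fracturable_trans:
  assumes "fracturable W V1" "fracturable V1 V2"
  shows "fracturable W V2"
  unfolding fracturable_def
proof (intro conjI notI)
  show "V2 \<subseteq> W" using assms unfolding fracturable_def by blast
next
  assume "\<exists>v\<in>V2. \<exists>v'\<in>W - V2. DG_le W v v'"
  then obtain v v' where vv: "v \<in> V2" "v' \<in> W - V2" "DG_le W v v'" by blast
  have vV1: "v \<in> V1" using assms(2) vv unfolding fracturable_def by blast
  show False
  proof (cases "v' \<in> V1")
    case True
    from restrict_path[OF assms(1) vV1] vv obtain w where
      "(horn_pair v, horn_pair v') \<in> (pair_step V1)\<^sup>*" unfolding DG_le_def by blast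
    then have "DG_le V1 v v'" unfolding DG_le_def by simp
    then show False using assms(2) vv True unfolding fracturable_def by blast
  next
    case False
    then show False using assms(1) vv vV1 unfolding fracturable_def by blast
  qed
qed

lemma fracturable_sub:
  assumes "fracturable W V2" "V2 \<subseteq> V1" "V1 \<subseteq> W"
  shows "fracturable V1 V2"
  using assms DG_le_mono unfolding fracturable_def by blast

definition FF :: "('e, 'r, 'l) calculus \<Rightarrow> ('e, 'r, 'l) rule set \<Rightarrow> ('e, 'r, 'l) calculus" where
  "FF A V = calc_absorb A (horns_grammar (horns A - V)) - (horns A - V)"

lemma horns_FF: "V \<subseteq> horns A \<Longrightarrow> horns (FF A V) = V"
  unfolding FF_def by (auto simp: horns_up)

lemma FF_top: "FF A (horns A) = A"
  unfolding FF_def by (simp add: horns_grammar_empty calc_absorb_empty)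

lemma FF_step:
  assumes "V2 \<subseteq> V1" "V1 \<subseteq> horns A"
  shows "up_step (FF A V1) (V1 - V2) = FF A V2"
proof -
  have h: "\<forall>h\<in>horns A - V1. is_horn h" unfolding horns_def by auto
  have e: "horns A - V1 \<union> (V1 - V2) = horns A - V2" using assms by blast
  show ?thesis
    unfolding up_step_def FF_def
    by (simp only: up_twice[OF h] horns_grammar_Un[symmetric] e)
qed

lemma upS_char: "upS A = FF A ` {V. fracturable (horns A) V}"
proof
  show "upS A \<subseteq> FF A ` {V. fracturable (horns A) V}"
  proof
    fix B assume "B \<in> upS A"
    then show "B \<in> FF A ` {V. fracturable (horns A) V}"
    proof (induction rule: upS.induct)
      case base
      have "fracturable (horns A) (horns A)" unfolding fracturable_def by auto
      then show ?case using FF_top by (metis image_eqI mem_Collect_eq)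
    next
      case (step B H')
      then obtain V1 where V1: "fracturable (horns A) V1" "B = FF A V1" by auto
      have sub1: "V1 \<subseteq> horns A" using V1 unfolding fracturable_def by auto
      have hB: "horns B = V1" using V1 horns_FF[OF sub1] by simp
      from step(3) hB obtain V2 where V2: "fracturable V1 V2" "H' = V1 - V2"
        unfolding anti_fracturable_def by auto
      have sub2: "V2 \<subseteq> V1" using V2 unfolding fracturable_def by auto
      have "fracturable (horns A) V2" using fracturable_trans V1(1) V2(1) by blast
      moreover have "up_step B H' = FF A V2" using FF_step[OF sub2 sub1] V1 V2 by simp
      ultimately show ?case by auto
    qed
  qed
next
  show "FF A ` {V. fracturable (horns A) V} \<subseteq> upS A"
  proof
    fix C assume "C \<in> FF A ` {V. fracturable (horns A) V}"
    then obtain V where V: "fracturable (horns A) V" "C = FF A V" by auto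
    have sub: "V \<subseteq> horns A" using V unfolding fracturable_def by auto
    have "up_step A (horns A - V) \<in> upS A"
    proof (rule upS.step[OF upS.base])
      show "horns A - V \<subseteq> horns A" by blast
      show "anti_fracturable (horns A) (horns A - V)"
        unfolding anti_fracturable_def using V(1) by blast
    qed
    moreover have "up_step A (horns A - V) = FF A V"
      using FF_step[OF sub order_refl] FF_top by metis
    ultimately show "C \<in> upS A" using V by simp
  qed
qed

lemma upR_char:
  assumes "fracturable (horns A) V1" "fracturable (horns A) V2"
  shows "(FF A V1, FF A V2) \<in> upR A \<longleftrightarrow> V2 \<subseteq> V1"
proof
  have sub1: "V1 \<subseteq> horns A" using assms unfolding fracturable_def by auto
  have sub2: "V2 \<subseteq> horns A" using assms unfolding fracturable_def by auto
  {
    assume "(FF A V1, FF A V2) \<in> upR A"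
    then obtain H' where "H' \<subseteq> horns (FF A V1)" "FF A V2 = up_step (FF A V1) H'"
      unfolding upR_def by auto
    then have "horns (FF A V2) = horns (FF A V1) - H'"
      unfolding up_step_def by (simp add: horns_up)
    then show "V2 \<subseteq> V1" using horns_FF[OF sub1] horns_FF[OF sub2] by auto
  }
  {
    assume le: "V2 \<subseteq> V1"
    have "FF A V1 \<in> upS A" unfolding upS_char using assms(1) by blast
    moreover have "anti_fracturable (horns (FF A V1)) (V1 - V2)"
      unfolding anti_fracturable_def horns_FF[OF sub1]
      using fracturable_sub[OF assms(2) le sub1] by blast
    moreover have "V1 - V2 \<subseteq> horns (FF A V1)" using horns_FF[OF sub1] by auto
    ultimately show "(FF A V1, FF A V2) \<in> upR A"
      unfolding upR_def using FF_step[OF le sub1] by blast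
  }
qed


lemma frac_Inter: "(\<forall>V\<in>VV. fracturable W V) \<Longrightarrow> fracturable W (W \<inter> \<Inter>VV)"
  unfolding fracturable_def by blast

lemma frac_Union: "(\<forall>V\<in>VV. fracturable W V) \<Longrightarrow> fracturable W (\<Union>VV)"
  unfolding fracturable_def by blast

lemma frac_horns: "x \<in> upS A \<Longrightarrow> fracturable (horns A) (horns x)"
  unfolding upS_char using horns_FF unfolding fracturable_def by force

lemma FF_in: "fracturable (horns A) V \<Longrightarrow> FF A V \<in> upS A \<and> horns (FF A V) = V"
  unfolding upS_char using horns_FF unfolding fracturable_def by auto

lemma le_iff:
  assumes "x \<in> upS A" "y \<in> upS A"
  shows "(x, y) \<in> upR A \<longleftrightarrow> horns y \<subseteq> horns x"
proof -
  obtain V1 where V1: "fracturable (horns A) V1" "x = FF A V1" using assms(1) upS_char by blast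
  obtain V2 where V2: "fracturable (horns A) V2" "y = FF A V2" using assms(2) upS_char by blast
  show ?thesis using upR_char[OF V1(1) V2(1)] V1 V2 FF_in by metis
qed

lemma inj_horns:
  assumes "x \<in> upS A" "y \<in> upS A" "horns x = horns y"
  shows "x = y"
proof -
  obtain V1 where V1: "fracturable (horns A) V1" "x = FF A V1" using assms(1) upS_char by blast
  obtain V2 where V2: "fracturable (horns A) V2" "y = FF A V2" using assms(2) upS_char by blast
  show ?thesis using V1 V2 FF_in assms(3) by metis
qed

lemma upR_sub: "upR A \<subseteq> upS A \<times> upS A"
  unfolding upR_def using upS.step by blast

theorem mainTheorem10:
  fixes A :: "('e::finite, 'r, 'l) calculus"
  assumes "abstract_calculus A"
  shows "partial_order_on (upS A) (upR A)
       \<and> connected_on (upS A) (upR A)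
       \<and> complete_lattice_on (upS A) (upR A)
       \<and> A \<in> upS A \<and> (\<forall>B \<in> upS A. (A, B) \<in> upR A)"
proof -
  let ?S = "upS A" and ?r = "upR A"
  have sub: "?r \<subseteq> ?S \<times> ?S" by (rule upR_sub)
  have AS: "A \<in> ?S" by (rule upS.base)
  have hA: "horns A = horns A" ..
  have bot: "\<forall>B\<in>?S. (A, B) \<in> ?r"
  proof
    fix B assume B: "B \<in> ?S"
    have "horns B \<subseteq> horns A" using frac_horns[OF B] unfolding fracturable_def by blast
    then show "(A, B) \<in> ?r" using le_iff[OF AS B] by blast
  qed
  have refl: "refl_on ?S ?r" unfolding refl_on_def using le_iff by blast
  have trans: "trans ?r"
  proof (rule transI)
    fix x y z assume xy: "(x, y) \<in> ?r" and yz: "(y, z) \<in> ?r"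
    have xyz: "x \<in> ?S" "y \<in> ?S" "z \<in> ?S" using sub xy yz by auto
    then show "(x, z) \<in> ?r" using le_iff xy yz by (meson order_trans)
  qed
  have anti: "antisym ?r"
  proof (rule antisymI)
    fix x y assume xy: "(x, y) \<in> ?r" and yx: "(y, x) \<in> ?r"
    have xyS: "x \<in> ?S" "y \<in> ?S" using sub xy by auto
    then have "horns x = horns y" using le_iff xy yx by blast
    then show "x = y" using inj_horns xyS by blast
  qed
  have po: "partial_order_on ?S ?r"
    unfolding partial_order_on_def preorder_on_def using refl trans anti sub by blast
  have conn: "connected_on ?S ?r"
    unfolding connected_on_def
  proof (intro ballI)
    fix x y assume x: "x \<in> ?S" and y: "y \<in> ?S"
    have "(x, A) \<in> (?r \<union> ?r\<inverse>)\<^sup>*" using bot x by blast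
    moreover have "(A, y) \<in> (?r \<union> ?r\<inverse>)\<^sup>*" using bot y by blast
    ultimately show "(x, y) \<in> (?r \<union> ?r\<inverse>)\<^sup>*" by (rule rtrancl_trans)
  qed
  have cl: "complete_lattice_on ?S ?r"
    unfolding complete_lattice_on_def
  proof (intro conjI po allI impI)
    fix X assume X: "X \<subseteq> ?S"
    have fX: "\<forall>V\<in>horns ` X. fracturable (horns A) V" using X frac_horns by blast
    define U where "U = horns A \<inter> \<Inter>(horns ` X)"
    have fU: "fracturable (horns A) U" unfolding U_def using frac_Inter[OF fX] .
    have U: "FF A U \<in> ?S" "horns (FF A U) = U" using FF_in[OF fU] by auto
    show "\<exists>u. is_lub_on ?S ?r X u"
    proof (intro exI)
      show "is_lub_on ?S ?r X (FF A U)"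
        unfolding is_lub_on_def
      proof (intro conjI ballI impI)
        show "FF A U \<in> ?S" using U by simp
        fix x assume "x \<in> X"
        then show "(x, FF A U) \<in> ?r" using le_iff[of x A "FF A U"] X U unfolding U_def by blast
      next
        fix v assume v: "v \<in> ?S" and up: "\<forall>x\<in>X. (x, v) \<in> ?r"
        have "horns v \<subseteq> horns A" using frac_horns[OF v] unfolding fracturable_def by blast
        moreover have "\<forall>x\<in>X. horns v \<subseteq> horns x" using up le_iff X v by blast
        ultimately have "horns v \<subseteq> U" unfolding U_def by blast
        then show "(FF A U, v) \<in> ?r" using le_iff[OF U(1) v] U by simp
      qed
    qed
    define L where "L = \<Union>(horns ` X)"
    have fL: "fracturable (horns A) L" unfolding L_def using frac_Union[OF fX] .
    have L: "FF A L \<in> ?S" "horns (FF A L) = L" using FF_in[OF fL] by auto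
    show "\<exists>l. is_glb_on ?S ?r X l"
    proof (intro exI)
      show "is_glb_on ?S ?r X (FF A L)"
        unfolding is_glb_on_def
      proof (intro conjI ballI impI)
        show "FF A L \<in> ?S" using L by simp
        fix x assume "x \<in> X"
        then show "(FF A L, x) \<in> ?r" using le_iff[of "FF A L" A x] X L unfolding L_def by blast
      next
        fix v assume v: "v \<in> ?S" and dn: "\<forall>x\<in>X. (v, x) \<in> ?r"
        have "\<forall>x\<in>X. horns x \<subseteq> horns v" using dn le_iff X v by blast
        then have "L \<subseteq> horns v" unfolding L_def by blast
        then show "(v, FF A L) \<in> ?r" using le_iff[OF v L(1)] L by simp
      qed
    qed
  qed
  show ?thesis using po conn cl AS bot by blast
qed

end
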